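(* Let $n \ge 1$ and let $X_1,\dots,X_n$ be independent Bernoulli random variables with $P(X_i=1)=p_i$, where $p_1 \le p_2 \le \cdots \le p_n$. For an integer $\theta$, let $\Pi_\theta(X_1,\dots,X_n)=1$ if $\sum_i X_i \ge \theta$ and $0$ otherwise. Consider adaptive transmission orderings: at each step a node that has not yet transmitted is chosen as a (deterministic) function of the bits broadcast so far, and it broadcasts its bit $X_i$; the process stops once the value of the function is determined by the broadcast bits. Then for every $0 \le k \le n-1$, among the orderings that minimize the expected number of broadcast bits needed to determine $\Pi_{n-k}(X_1,\dots,X_n)$, there is one in which node $k+1$ transmits first. Equivalently, defining for a set $S$ of nodes and integer $\theta$: $C(S,\theta)=0$ if $\theta\le 0$ or $\theta>|S|$, and otherwise $C(S,\theta)=\min_{i\in S}\{1+p_i\,C(S\setminus\{i\},\theta-1)+(1-p_i)\,C(S\setminus\{i\},\theta)\}$, the minimum defining $C(\{1,\dots,n\},n-k)$ is attained at $i=k+1$.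
   Context: Setting: a collocated (broadcast) network of $n$ nodes, every transmission is heard by all nodes, at most one node transmits at a time, and collisions convey no information, so the identity of the node sending the $j$-th bit depends only on the previously broadcast bits. Each node $i$ holds a single bit $X_i$, and every node must compute $\Pi_{n-k}(X_1,\dots,X_n)$ with zero error. $C(S,\theta)$ is the minimum expected number of broadcast bits needed to compute the threshold function with threshold $\theta$ of the bits of the nodes in $S$. *)

theory Defs
  imports Complex_Main
begin

text \<open>Nodes are natural numbers, p i is the probability
  that node i holds bit 1. The auxiliary first argument is a recursion depth
  equal to the cardinality of the node set (see C below).\<close>

fun Cf :: "nat \<Rightarrow> (nat \<Rightarrow> real) \<Rightarrow> nat set \<Rightarrow> int \<Rightarrow> real" where
  "Cf 0 p S \<theta> = 0"
| "Cf (Suc m) p S \<theta> =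
     (if \<theta> \<le> 0 \<or> \<theta> > int (Suc m) then 0
      else Min ((\<lambda>i. 1 + p i * Cf m p (S - {i}) (\<theta> - 1)
                     + (1 - p i) * Cf m p (S - {i}) \<theta>) ` S))"

definition C :: "(nat \<Rightarrow> real) \<Rightarrow> nat set \<Rightarrow> int \<Rightarrow> real" where
  "C p S \<theta> = Cf (card S) p S \<theta>"

end

theory Submission
  imports Defs
begin

fun ple :: "real list \<Rightarrow> int \<Rightarrow> real" where
  "ple [] k = (if 0 \<le> k then 1 else 0)"
| "ple (x#xs) k = x * ple xs (k-1) + (1-x) * ple xs k"

fun pe :: "real list \<Rightarrow> int \<Rightarrow> real" where
  "pe [] k = (if k = 0 then 1 else 0)"
| "pe (x#xs) k = x * pe xs (k-1) + (1-x) * pe xs k"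

definition del :: "nat \<Rightarrow> 'a list \<Rightarrow> 'a list" where
  "del i xs = take i xs @ drop (Suc i) xs"

definition rc :: "real list \<Rightarrow> real list" where
  "rc xs = rev (map (\<lambda>x. 1 - x) xs)"

definition Lsum :: "real list \<Rightarrow> int \<Rightarrow> real" where
  "Lsum xs \<theta> = (\<Sum>j<nat (int (length xs) - \<theta>). ple (drop (Suc j) xs) (\<theta> - 1))"

definition E :: "real list \<Rightarrow> int \<Rightarrow> real" where
  "E xs \<theta> = (if 1 \<le> \<theta> \<and> \<theta> \<le> int (length xs)
      then 1 + Lsum xs \<theta> + Lsum (rc xs) (int (length xs) + 1 - \<theta>) else 0)"

definition gE :: "real list \<Rightarrow> int \<Rightarrow> nat \<Rightarrow> real" where
  "gE xs \<theta> i = 1 + xs!i * E (del i xs) (\<theta> - 1) + (1 - xs!i) * E (del i xs) \<theta>"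

lemma ple_neg: "k < 0 \<Longrightarrow> ple xs k = 0"
  by (induction xs arbitrary: k) auto

lemma ple_len: "int (length xs) \<le> k \<Longrightarrow> ple xs k = 1"
  by (induction xs arbitrary: k) auto

lemma ple_diff: "ple xs k - ple xs (k-1) = pe xs k"
proof (induction xs arbitrary: k)
  case Nil then show ?case by simp
next
  case (Cons x xs)
  have "ple (x#xs) k - ple (x#xs) (k-1) = x * (ple xs (k-1) - ple xs (k-1-1)) + (1-x) * (ple xs k - ple xs (k-1))"
    by (simp add: algebra_simps)
  also have "\<dots> = x * pe xs (k-1) + (1-x) * pe xs k" by (simp only: Cons.IH)
  finally show ?case by simp
qed


lemma ple_cons': "ple (x#xs) k = ple xs k - x * pe xs k"
  using ple_diff[of xs k] by (simp add: algebra_simps)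

lemma pe_nonneg: "(\<forall>x\<in>set xs. 0 \<le> x \<and> x \<le> 1) \<Longrightarrow> 0 \<le> pe xs k"
proof (induction xs arbitrary: k)
  case Nil then show ?case by simp
next
  case (Cons x xs)
  then have x: "0 \<le> x" "0 \<le> 1 - x" by auto
  have "0 \<le> pe xs (k-1)" "0 \<le> pe xs k" using Cons by auto
  with x show ?case by (simp add: mult_nonneg_nonneg add_nonneg_nonneg del: pe.simps(1)) 
qed

lemma ple_mid: "ple (us @ y # vs) c = y * ple (us @ vs) (c-1) + (1-y) * ple (us @ vs) c"
proof (induction us arbitrary: c)
  case Nil then show ?case by simp
next
  case (Cons u us)
  show ?case
    by (simp only: append_Cons ple.simps Cons.IH) (simp add: algebra_simps)
qed

lemma ple_del: "k < length X \<Longrightarrow> ple X c = X!k * ple (del k X) (c-1) + (1 - X!k) * ple (del k X) c"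
proof -
  assume k: "k < length X"
  have e: "take k X @ X!k # drop (Suc k) X = X" by (rule id_take_nth_drop[OF k, symmetric])
  show ?thesis using ple_mid[of "take k X" "X!k" "drop (Suc k) X" c] unfolding e
    by (simp add: del_def)
qed

lemma tail_sum: "0 \<le> k \<Longrightarrow> r \<le> length xs \<Longrightarrow>
   1 - ple (drop r xs) k = (\<Sum>t\<in>{r..<length xs}. xs!t * pe (drop (Suc t) xs) k)"
proof (induction "length xs - r" arbitrary: r)
  case 0
  then have "drop r xs = []" by simp
  with 0 show ?case by simp
next
  case (Suc n)
  then have r: "r < length xs" by simp
  have d: "drop r xs = xs!r # drop (Suc r) xs" using r by (simp add: Cons_nth_drop_Suc)
  have A: "(\<Sum>t\<in>{r..<length xs}. xs!t * pe (drop (Suc t) xs) k)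
     = xs!r * pe (drop (Suc r) xs) k + (\<Sum>t\<in>{Suc r..<length xs}. xs!t * pe (drop (Suc t) xs) k)"
    using r by (subst sum.atLeast_Suc_lessThan) auto
  have B: "1 - ple (drop (Suc r) xs) k = (\<Sum>t\<in>{Suc r..<length xs}. xs!t * pe (drop (Suc t) xs) k)"
    by (rule Suc.hyps(1)) (use Suc.hyps(2) Suc.prems r in auto)
  have "1 - ple (drop r xs) k = (1 - ple (drop (Suc r) xs) k) + xs!r * pe (drop (Suc r) xs) k"
    unfolding d ple_cons' by (simp add: algebra_simps)
  also have "\<dots> = (\<Sum>t\<in>{Suc r..<length xs}. xs!t * pe (drop (Suc t) xs) k) + xs!r * pe (drop (Suc r) xs) k"
    by (simp only: B)
  also have "\<dots> = (\<Sum>t\<in>{r..<length xs}. xs!t * pe (drop (Suc t) xs) k)"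
    unfolding A by (rule add.commute)
  finally show ?case .
qed

lemma length_del[simp]: "i < length xs \<Longrightarrow> length (del i xs) = length xs - 1"
  by (simp add: del_def)

lemma drop_del_lt: "Suc j \<le> i \<Longrightarrow> i < length xs \<Longrightarrow>
   drop (Suc j) (del i xs) = del (i - Suc j) (drop (Suc j) xs)"
  by (simp add: del_def drop_take)

lemma drop_del_ge: "i \<le> j \<Longrightarrow> i < length xs \<Longrightarrow>
   drop (Suc j) (del i xs) = drop (Suc (Suc j)) xs"
  by (simp add: del_def)

lemma nth_drop_del: "Suc j \<le> i \<Longrightarrow> i < length xs \<Longrightarrow> drop (Suc j) xs ! (i - Suc j) = xs!i"
  by simp

lemma rc_len[simp]: "length (rc xs) = length xs" by (simp add: rc_def)
lemma rc_rc[simp]: "rc (rc xs) = xs" by (simp add: rc_def rev_map comp_def)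
lemma rc_nth: "i < length xs \<Longrightarrow> rc xs ! (length xs - 1 - i) = 1 - xs!i"
  by (simp add: rc_def rev_nth)
lemma rc_del: "i < length xs \<Longrightarrow> rc (del i xs) = del (length xs - 1 - i) (rc xs)"
proof -
  assume i: "i < length xs"
  define ys where "ys = map (\<lambda>x. 1 - x) xs"
  have l: "length ys = length xs" by (simp add: ys_def)
  have "rc (del i xs) = rev (drop (Suc i) ys) @ rev (take i ys)"
    by (simp add: rc_def del_def ys_def take_map drop_map)
  also have "rev (drop (Suc i) ys) = take (length ys - Suc i) (rev ys)" by (rule rev_drop)
  also have "rev (take i ys) = drop (length ys - i) (rev ys)" by (rule rev_take)
  finally show ?thesis using i l
    by (simp add: del_def rc_def ys_def[symmetric] Suc_diff_Suc)
qed


lemma Lsum_zero: "Lsum X 0 = 0"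
  by (simp add: Lsum_def ple_neg)

lemma Lsum_empty: "nat (int (length X) - \<theta>) = 0 \<Longrightarrow> Lsum X \<theta> = 0"
  by (simp add: Lsum_def)

lemma sumlem:
  fixes f u :: "nat \<Rightarrow> real"
  assumes "i \<le> m"
  shows "(\<Sum>j<m. if j < i then f j else f (Suc j) - x * u (Suc j))
       = (\<Sum>j<m. f j) - f i + f m - x * (\<Sum>j\<in>{Suc i..m}. u j)"
  using assms
proof (induction m)
  case 0 then show ?case by simp
next
  case (Suc m)
  show ?case
  proof (cases "i \<le> m")
    case True
    have e: "{Suc i..Suc m} = insert (Suc m) {Suc i..m}" using True by auto
    have "(\<Sum>j<Suc m. if j < i then f j else f (Suc j) - x * u (Suc j))
        = (\<Sum>j<m. if j < i then f j else f (Suc j) - x * u (Suc j)) + (f (Suc m) - x * u (Suc m))"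
      using True by simp
    also have "\<dots> = (\<Sum>j<m. f j) - f i + f m - x * (\<Sum>j\<in>{Suc i..m}. u j) + (f (Suc m) - x * u (Suc m))"
      using Suc.IH[OF True] by simp
    also have "\<dots> = (\<Sum>j<Suc m. f j) - f i + f (Suc m) - x * (\<Sum>j\<in>{Suc i..Suc m}. u j)"
      unfolding e by (simp add: algebra_simps)
    finally show ?thesis .
  next
    case False
    then have i: "i = Suc m" using Suc.prems by simp
    have "(\<Sum>j<Suc m. if j < i then f j else f (Suc j) - x * u (Suc j)) = (\<Sum>j<Suc m. f j)"
      using i by (intro sum.cong) auto
    then show ?thesis using i by simp
  qed
qed

lemma lsplit:
  assumes s: "length xs = s" and th1: "1 \<le> \<theta>" and th2: "\<theta> < int s" and i: "i < s"
    and m: "m = nat (int s - \<theta>)"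
  shows "xs!i * Lsum (del i xs) (\<theta>-1) + (1 - xs!i) * Lsum (del i xs) \<theta>
     = (\<Sum>j<m. xs!i * ple (drop (Suc j) (del i xs)) (\<theta>-1-1) + (1 - xs!i) * ple (drop (Suc j) (del i xs)) (\<theta>-1)) - (1 - xs!i)"
proof -
  define D where "D = del i xs"
  define x where "x = xs!i"
  have lD: "length D = s - 1" using i s by (simp add: D_def)
  have im: "int m = int s - \<theta>" using m th2 by simp
  have m1: "1 \<le> m" using m th2 by simp
  then obtain m' where m': "m = Suc m'" by (cases m) auto
  have sm: "Suc m \<le> s" using im th1 by linarith
  have n1: "nat (int (length D) - (\<theta> - 1)) = m" using lD im i by simp
  have n0: "nat (int (length D) - \<theta>) = m'" using lD im i m' by simp
  have L1: "Lsum D (\<theta>-1) = (\<Sum>j<m. ple (drop (Suc j) D) (\<theta>-1-1))"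
    unfolding Lsum_def n1 ..
  have last: "ple (drop (Suc m') D) (\<theta>-1) = 1"
  proof (rule ple_len)
    have "int (length (drop (Suc m') D)) = int s - int m - 1"
      using lD m' i sm by (simp add: of_nat_diff)
    then show "int (length (drop (Suc m') D)) \<le> \<theta> - 1" using im by linarith
  qed
  have "Lsum D \<theta> = (\<Sum>j<m'. ple (drop (Suc j) D) (\<theta>-1))"
    unfolding Lsum_def n0 ..
  moreover have "(\<Sum>j<m. ple (drop (Suc j) D) (\<theta>-1)) = (\<Sum>j<m'. ple (drop (Suc j) D) (\<theta>-1)) + 1"
    unfolding m' sum.lessThan_Suc last ..
  ultimately have L0: "Lsum D \<theta> = (\<Sum>j<m. ple (drop (Suc j) D) (\<theta>-1)) - 1" by simp
  have dist: "(\<Sum>j<m. x * ple (drop (Suc j) D) (\<theta>-1-1) + (1 - x) * ple (drop (Suc j) D) (\<theta>-1))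
      = x * (\<Sum>j<m. ple (drop (Suc j) D) (\<theta>-1-1)) + (1 - x) * (\<Sum>j<m. ple (drop (Suc j) D) (\<theta>-1))"
    by (simp add: sum.distrib sum_distrib_left)
  show ?thesis
    unfolding D_def[symmetric] x_def[symmetric] L1 L0 dist
    by (simp add: right_diff_distrib)
qed

lemma hlt:
  assumes "i < length xs" "j < i"
  shows "xs!i * ple (drop (Suc j) (del i xs)) (c-1) + (1 - xs!i) * ple (drop (Suc j) (del i xs)) c
       = ple (drop (Suc j) xs) c"
proof -
  have k: "i - Suc j < length (drop (Suc j) xs)" using assms by simp
  show ?thesis
    using ple_del[OF k, of c] assms
    by (simp add: drop_del_lt nth_drop_del)
qed

lemma hge:
  assumes "i < length xs" "i \<le> j"
  shows "xs!i * ple (drop (Suc j) (del i xs)) (c-1) + (1 - xs!i) * ple (drop (Suc j) (del i xs)) c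
       = ple (drop (Suc (Suc j)) xs) c - xs!i * pe (drop (Suc (Suc j)) xs) c"
proof -
  have "drop (Suc j) (del i xs) = drop (Suc (Suc j)) xs" using assms by (simp add: drop_del_ge)
  moreover have "ple Y c - ple Y (c-1) = pe Y c" for Y by (rule ple_diff)
  ultimately show ?thesis by (simp add: algebra_simps)
qed

lemma fm_one:
  assumes "length xs = s" "1 \<le> \<theta>" "\<theta> < int s" "m = nat (int s - \<theta>)"
  shows "ple (drop (Suc m) xs) (\<theta>-1) = 1"
proof (rule ple_len)
  have im: "int m = int s - \<theta>" using assms by simp
  have sm: "Suc m \<le> s" using im assms by linarith
  have "int (length (drop (Suc m) xs)) = int s - int m - 1"
    using assms sm by (simp add: of_nat_diff)
  then show "int (length (drop (Suc m) xs)) \<le> \<theta> - 1" using im by linarith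
qed

lemma LA:
  assumes s: "length xs = s" and th1: "1 \<le> \<theta>" and th2: "\<theta> < int s" and i: "i < s"
    and m: "m = nat (int s - \<theta>)" and im: "i \<le> m"
  shows "xs!i * Lsum (del i xs) (\<theta>-1) + (1 - xs!i) * Lsum (del i xs) \<theta>
     = Lsum xs \<theta> - ple (drop (Suc i) xs) (\<theta>-1) + xs!i
       - xs!i * (\<Sum>t\<in>{Suc i..m}. pe (drop (Suc t) xs) (\<theta>-1))"
proof -
  define f where "f j = ple (drop (Suc j) xs) (\<theta>-1)" for j
  define u where "u j = pe (drop (Suc j) xs) (\<theta>-1)" for j
  define x where "x = xs!i"
  have "(\<Sum>j<m. xs!i * ple (drop (Suc j) (del i xs)) (\<theta>-1-1) + (1 - xs!i) * ple (drop (Suc j) (del i xs)) (\<theta>-1))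
      = (\<Sum>j<m. if j < i then f j else f (Suc j) - x * u (Suc j))"
  proof (rule sum.cong)
    fix j assume "j \<in> {..<m}"
    show "xs!i * ple (drop (Suc j) (del i xs)) (\<theta>-1-1) + (1 - xs!i) * ple (drop (Suc j) (del i xs)) (\<theta>-1)
        = (if j < i then f j else f (Suc j) - x * u (Suc j))"
    proof (cases "j < i")
      case True then show ?thesis using hlt[of i xs j "\<theta>-1"] i s by (simp add: f_def)
    next
      case False then show ?thesis using hge[of i xs j "\<theta>-1"] i s by (simp add: f_def u_def x_def)
    qed
  qed simp
  also have "\<dots> = (\<Sum>j<m. f j) - f i + f m - x * (\<Sum>j\<in>{Suc i..m}. u j)"
    by (rule sumlem[OF im])
  finally have S: "(\<Sum>j<m. xs!i * ple (drop (Suc j) (del i xs)) (\<theta>-1-1) + (1 - xs!i) * ple (drop (Suc j) (del i xs)) (\<theta>-1))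
      = (\<Sum>j<m. f j) - f i + f m - x * (\<Sum>j\<in>{Suc i..m}. u j)" .
  have fm: "f m = 1" unfolding f_def by (rule fm_one[OF s th1 th2 m])
  have Lx: "Lsum xs \<theta> = (\<Sum>j<m. f j)" unfolding Lsum_def f_def s m[symmetric] ..
  show ?thesis
    unfolding lsplit[OF s th1 th2 i m] S fm Lx
    by (simp add: f_def u_def x_def)
qed

lemma LB:
  assumes s: "length xs = s" and th1: "1 \<le> \<theta>" and th2: "\<theta> < int s" and i: "i < s"
    and m: "m = nat (int s - \<theta>)" and im: "m \<le> i"
  shows "xs!i * Lsum (del i xs) (\<theta>-1) + (1 - xs!i) * Lsum (del i xs) \<theta> = Lsum xs \<theta> - 1 + xs!i"
proof -
  have "(\<Sum>j<m. xs!i * ple (drop (Suc j) (del i xs)) (\<theta>-1-1) + (1 - xs!i) * ple (drop (Suc j) (del i xs)) (\<theta>-1))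
      = (\<Sum>j<m. ple (drop (Suc j) xs) (\<theta>-1))"
  proof (rule sum.cong)
    fix j assume "j \<in> {..<m}"
    then have "j < i" using im by simp
    then show "xs!i * ple (drop (Suc j) (del i xs)) (\<theta>-1-1) + (1 - xs!i) * ple (drop (Suc j) (del i xs)) (\<theta>-1)
        = ple (drop (Suc j) xs) (\<theta>-1)" using hlt[of i xs j "\<theta>-1"] i s by simp
  qed simp
  moreover have Lx: "Lsum xs \<theta> = (\<Sum>j<m. ple (drop (Suc j) xs) (\<theta>-1))" unfolding Lsum_def s m[symmetric] ..
  ultimately show ?thesis
    unfolding lsplit[OF s th1 th2 i m] by simp
qed

lemma E_in: "1 \<le> \<theta> \<Longrightarrow> \<theta> \<le> int (length xs) \<Longrightarrow>
   E xs \<theta> = 1 + Lsum xs \<theta> + Lsum (rc xs) (int (length xs) + 1 - \<theta>)"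
  by (simp add: E_def)

lemma E_out: "\<not> (1 \<le> \<theta> \<and> \<theta> \<le> int (length xs)) \<Longrightarrow> E xs \<theta> = 0"
  unfolding E_def by auto

lemma ID:
  assumes i: "i < length xs" and th1: "1 \<le> \<theta>" and th2: "\<theta> \<le> int (length xs)"
    and im: "i \<le> nat (int (length xs) - \<theta>)"
  shows "gE xs \<theta> i - E xs \<theta> = 1 - ple (drop (Suc i) xs) (\<theta>-1)
     - xs!i * (\<Sum>t\<in>{Suc i..nat (int (length xs) - \<theta>)}. pe (drop (Suc t) xs) (\<theta>-1))"
proof -
  define s where "s = length xs"
  define m where "m = nat (int s - \<theta>)"
  define x where "x = xs!i"
  define D where "D = del i xs"
  define ys where "ys = rc xs"
  define i' where "i' = s - 1 - i"
  define \<Sigma> where "\<Sigma> = (\<Sum>t\<in>{Suc i..m}. pe (drop (Suc t) xs) (\<theta>-1))"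
  have ls: "length xs = s" by (simp add: s_def)
  have iS: "i < s" using i by (simp add: s_def)
  have lD: "length D = s - 1" using iS by (simp add: D_def s_def)
  have lys: "length ys = s" by (simp add: ys_def s_def)
  have i's: "i' < s" using iS by (simp add: i'_def)
  have rcD: "rc D = del i' ys" unfolding D_def ys_def i'_def s_def by (rule rc_del[OF i])
  have ysi: "ys!i' = 1 - x" unfolding ys_def i'_def x_def s_def by (rule rc_nth[OF i])
  have lrcD: "length (rc D) = s - 1" using lD by simp
  have gE_eq: "gE xs \<theta> i = 1 + x * E D (\<theta>-1) + (1-x) * E D \<theta>"
    by (simp add: gE_def x_def D_def)
  have Exs: "E xs \<theta> = 1 + Lsum xs \<theta> + Lsum ys (int s + 1 - \<theta>)"
    using E_in[OF th1 th2] by (simp add: ys_def s_def)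
  show ?thesis
  proof (cases "\<theta> < int s")
    case True
    note th2' = True
    have mI: "m = nat (int s - \<theta>)" by (simp add: m_def)
    have LAi: "x * Lsum D (\<theta>-1) + (1 - x) * Lsum D \<theta> = Lsum xs \<theta> - ple (drop (Suc i) xs) (\<theta>-1) + x - x * \<Sigma>"
      using LA[OF ls th1 th2' iS mI] im by (simp add: x_def D_def \<Sigma>_def m_def s_def)
    have s1: "1 \<le> s" using iS by simp
    have ED0: "E D \<theta> = 1 + Lsum D \<theta> + Lsum (rc D) (int s - \<theta>)"
      using E_in[of \<theta> D] th1 th2' lD s1 by (simp add: of_nat_diff)
    show ?thesis
    proof (cases "\<theta> = 1")
      case True
      have a: "E D (\<theta>-1) = 0" using True by (simp add: E_out)
      have b: "Lsum (rc D) (int s - \<theta>) = 0"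
        by (rule Lsum_empty) (use lrcD True s1 in \<open>simp add: of_nat_diff\<close>)
      have c: "Lsum ys (int s + 1 - \<theta>) = 0"
        by (rule Lsum_empty) (use lys True in simp)
      have d: "Lsum D (\<theta>-1) = 0" using True Lsum_zero by simp
      show ?thesis
        unfolding gE_eq Exs ED0 a b c
        using LAi d by (simp add: \<Sigma>_def m_def s_def x_def algebra_simps)
    next
      case False
      then have th12: "2 \<le> \<theta>" using th1 by simp
      have ar: "int s - (\<theta> - 1) = int s + 1 - \<theta>" by simp
      have ED1: "E D (\<theta>-1) = 1 + Lsum D (\<theta>-1) + Lsum (rc D) (int s + 1 - \<theta>)"
        using E_in[of "\<theta>-1" D] th12 th2' lD s1 by (simp add: of_nat_diff ar del: diff_diff_eq2)
      have mB: "nat (int s - (int s + 1 - \<theta>)) = nat (\<theta> - 1)" by simp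
      have LBi: "ys!i' * Lsum (del i' ys) (int s + 1 - \<theta> - 1) + (1 - ys!i') * Lsum (del i' ys) (int s + 1 - \<theta>)
          = Lsum ys (int s + 1 - \<theta>) - 1 + ys!i'"
      proof (rule LB[OF lys _ _ i's refl])
        show "1 \<le> int s + 1 - \<theta>" using th2 by (simp add: s_def)
        show "int s + 1 - \<theta> < int s" using th12 by simp
        show "nat (int s - (int s + 1 - \<theta>)) \<le> i'"
          using im iS th2' unfolding i'_def m_def s_def by simp
      qed
      have LBi': "(1 - x) * Lsum (rc D) (int s - \<theta>) + x * Lsum (rc D) (int s + 1 - \<theta>)
          = Lsum ys (int s + 1 - \<theta>) - x"
        using LBi unfolding rcD[symmetric] ysi by (simp add: algebra_simps)
      have "gE xs \<theta> i - E xs \<theta> = 1 + (x * Lsum D (\<theta>-1) + (1 - x) * Lsum D \<theta>)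
           + ((1 - x) * Lsum (rc D) (int s - \<theta>) + x * Lsum (rc D) (int s + 1 - \<theta>))
           - Lsum xs \<theta> - Lsum ys (int s + 1 - \<theta>)"
        unfolding gE_eq Exs ED0 ED1 by (simp add: algebra_simps)
      also have "\<dots> = 1 - ple (drop (Suc i) xs) (\<theta>-1) - x * \<Sigma>"
        unfolding LAi LBi' by simp
      finally show ?thesis by (simp add: \<Sigma>_def m_def s_def x_def)
    qed
  next
    case False
    then have ts: "\<theta> = int s" using th2 by (simp add: s_def)
    then have i0: "i = 0" using im by (simp add: s_def)
    have emp: "{Suc i..nat (int (length xs) - \<theta>)} = {}" using ts i0 by (simp add: s_def)
    have p1: "ple (drop (Suc i) xs) (\<theta>-1) = 1"
      by (rule ple_len) (use ts i0 iS in \<open>simp add: s_def of_nat_diff\<close>)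
    have ED0: "E D \<theta> = 0" using ts lD iS by (simp add: E_out)
    have L0: "Lsum xs \<theta> = 0" by (rule Lsum_empty) (use ts in \<open>simp add: s_def\<close>)
    have "gE xs \<theta> i = E xs \<theta>"
    proof (cases "s = 1")
      case True
      have "D = []" using lD True by simp
      then have "E D (\<theta>-1) = 0" by (simp add: E_out)
      moreover have "Lsum ys (int s + 1 - \<theta>) = 0" by (rule Lsum_empty) (use ts True lys in simp)
      ultimately show ?thesis unfolding gE_eq Exs ED0 L0 by simp
    next
      case False
      then have s2: "2 \<le> s" using iS by simp
      have ED1: "E D (\<theta>-1) = 1 + Lsum (rc D) 1"
      proof -
        have "E D (\<theta>-1) = 1 + Lsum D (\<theta>-1) + Lsum (rc D) (int (length D) + 1 - (\<theta>-1))"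
          by (rule E_in) (use ts lD s2 in \<open>simp_all add: of_nat_diff\<close>)
        moreover have "Lsum D (\<theta>-1) = 0" by (rule Lsum_empty) (use ts lD s2 in \<open>simp add: of_nat_diff\<close>)
        moreover have "int (length D) + 1 - (\<theta>-1) = 1" using ts lD s2 by (simp add: of_nat_diff)
        ultimately show ?thesis by simp
      qed
      have i'v: "i' = s - 1" using i0 by (simp add: i'_def)
      have LBi: "ys!i' * Lsum (del i' ys) (1 - 1) + (1 - ys!i') * Lsum (del i' ys) 1 = Lsum ys 1 - 1 + ys!i'"
        by (rule LB[OF lys _ _ i's refl]) (use s2 i'v in auto)
      then have "x * Lsum (rc D) 1 = Lsum ys 1 - x"
        unfolding rcD[symmetric] ysi using Lsum_zero by simp
      moreover have "int s + 1 - \<theta> = 1" using ts by simp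
      ultimately show ?thesis unfolding gE_eq Exs ED0 L0 ED1 by (simp add: algebra_simps)
    qed
    then show ?thesis unfolding emp p1 by simp
  qed
qed

lemma E_sym: "E (rc xs) (int (length xs) + 1 - \<theta>) = E xs \<theta>"
  unfolding E_def by auto

lemma gE_sym:
  assumes i: "i < length xs"
  shows "gE (rc xs) (int (length xs) + 1 - \<theta>) (length xs - 1 - i) = gE xs \<theta> i"
proof -
  define s where "s = length xs"
  define D where "D = del i xs"
  have lD: "length D = s - 1" using i by (simp add: D_def s_def)
  have s1: "1 \<le> s" using i by (simp add: s_def)
  have d: "del (s - 1 - i) (rc xs) = rc D" unfolding D_def s_def by (rule rc_del[OF i, symmetric])
  have n: "rc xs ! (s - 1 - i) = 1 - xs!i" unfolding s_def by (rule rc_nth[OF i])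
  have e1: "E (rc D) (int s + 1 - \<theta> - 1) = E D \<theta>"
  proof -
    have eq: "int s + 1 - \<theta> - 1 = int (length D) + 1 - \<theta>" using lD s1 by (simp add: of_nat_diff)
    show ?thesis unfolding eq by (rule E_sym)
  qed
  have e2: "E (rc D) (int s + 1 - \<theta>) = E D (\<theta> - 1)"
  proof -
    have eq: "int s + 1 - \<theta> = int (length D) + 1 - (\<theta> - 1)" using lD s1 by (simp add: of_nat_diff)
    show ?thesis unfolding eq by (rule E_sym)
  qed
  show ?thesis
    unfolding gE_def s_def[symmetric] d n e1 e2 by (simp add: D_def algebra_simps)
qed

definition good :: "real list \<Rightarrow> bool" where
  "good xs \<longleftrightarrow> (\<forall>x\<in>set xs. 0 \<le> x \<and> x \<le> 1) \<and> (\<forall>a b. a \<le> b \<longrightarrow> b < length xs \<longrightarrow> xs!a \<le> xs!b)"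

lemma good_rc: "good xs \<Longrightarrow> good (rc xs)"
  unfolding good_def
proof (intro conjI allI impI ballI)
  assume g: "(\<forall>x\<in>set xs. 0 \<le> x \<and> x \<le> 1) \<and> (\<forall>a b. a \<le> b \<longrightarrow> b < length xs \<longrightarrow> xs!a \<le> xs!b)"
  fix y assume "y \<in> set (rc xs)"
  then obtain x where "x \<in> set xs" "y = 1 - x" by (auto simp: rc_def)
  then show "0 \<le> y" "y \<le> 1" using g by auto
next
  fix a b
  assume g: "(\<forall>x\<in>set xs. 0 \<le> x \<and> x \<le> 1) \<and> (\<forall>a b. a \<le> b \<longrightarrow> b < length xs \<longrightarrow> xs!a \<le> xs!b)"
    and ab: "a \<le> b" "b < length (rc xs)"
  have a: "rc xs ! a = 1 - xs ! (length xs - 1 - a)" using ab by (simp add: rc_def rev_nth)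
  have b: "rc xs ! b = 1 - xs ! (length xs - 1 - b)" using ab by (simp add: rc_def rev_nth)
  have "xs ! (length xs - 1 - b) \<le> xs ! (length xs - 1 - a)" using g ab by simp
  then show "rc xs ! a \<le> rc xs ! b" using a b by simp
qed

lemma bell_left:
  assumes g: "good xs" and i: "i < length xs" and th1: "1 \<le> \<theta>" and th2: "\<theta> \<le> int (length xs)"
    and im: "i \<le> nat (int (length xs) - \<theta>)"
  shows "E xs \<theta> \<le> gE xs \<theta> i"
proof -
  define s where "s = length xs"
  define m where "m = nat (int s - \<theta>)"
  define u where "u t = pe (drop (Suc t) xs) (\<theta>-1)" for t
  have ms: "m < s" using th1 th2 by (simp add: m_def s_def)
  have rng: "\<forall>x\<in>set xs. 0 \<le> x \<and> x \<le> 1" and srt: "\<And>a b. a \<le> b \<Longrightarrow> b < s \<Longrightarrow> xs!a \<le> xs!b"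
    using g by (auto simp: good_def s_def)
  have u0: "0 \<le> u t" for t unfolding u_def
    by (rule pe_nonneg) (use rng in \<open>auto dest: in_set_dropD\<close>)
  have T: "1 - ple (drop (Suc i) xs) (\<theta>-1) = (\<Sum>t\<in>{Suc i..<s}. xs!t * u t)"
    unfolding u_def s_def by (rule tail_sum) (use th1 i in auto)
  have "(\<Sum>t\<in>{Suc i..m}. xs!i * u t) \<le> (\<Sum>t\<in>{Suc i..m}. xs!t * u t)"
  proof (rule sum_mono)
    fix t assume "t \<in> {Suc i..m}"
    then have "xs!i \<le> xs!t" using srt ms by auto
    then show "xs!i * u t \<le> xs!t * u t" using u0 by (simp add: mult_right_mono)
  qed
  also have "\<dots> \<le> (\<Sum>t\<in>{Suc i..<s}. xs!t * u t)"
  proof (rule sum_mono2)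
    show "{Suc i..m} \<subseteq> {Suc i..<s}" using ms by auto
    fix t assume "t \<in> {Suc i..<s} - {Suc i..m}"
    then have "xs!t \<in> set xs" by (auto simp: s_def)
    then show "0 \<le> xs!t * u t" using rng u0 by simp
  qed simp
  finally have "xs!i * (\<Sum>t\<in>{Suc i..m}. u t) \<le> 1 - ple (drop (Suc i) xs) (\<theta>-1)"
    unfolding T by (simp add: sum_distrib_left)
  then show ?thesis using ID[OF i th1 th2 im] by (simp add: u_def m_def s_def)
qed

lemma bell_med:
  assumes i: "nat (int (length xs) - \<theta>) < length xs" and th1: "1 \<le> \<theta>" and th2: "\<theta> \<le> int (length xs)"
  shows "gE xs \<theta> (nat (int (length xs) - \<theta>)) = E xs \<theta>"
proof -
  have "ple (drop (Suc (nat (int (length xs) - \<theta>))) xs) (\<theta>-1) = 1"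
    by (rule ple_len) (use th1 th2 in simp)
  then show ?thesis using ID[OF i th1 th2 order.refl] by simp
qed

lemma bell:
  assumes g: "good xs" and i: "i < length xs" and th1: "1 \<le> \<theta>" and th2: "\<theta> \<le> int (length xs)"
  shows "E xs \<theta> \<le> gE xs \<theta> i"
proof (cases "i \<le> nat (int (length xs) - \<theta>)")
  case True then show ?thesis using bell_left[OF g i th1 th2] by simp
next
  case False
  define s where "s = length xs"
  have i': "s - 1 - i < length (rc xs)" using i by (simp add: s_def)
  have "E (rc xs) (int s + 1 - \<theta>) \<le> gE (rc xs) (int s + 1 - \<theta>) (s - 1 - i)"
    by (rule bell_left[OF good_rc[OF g] i']) (use th1 th2 False i in \<open>auto simp: s_def\<close>)
  then show ?thesis using E_sym[of xs \<theta>] gE_sym[OF i, of \<theta>] by (simp add: s_def)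
qed

lemma remove1_del:
  assumes d: "distinct ls" and k: "k < length ls"
  shows "remove1 (ls!k) ls = del k ls"
proof -
  have e: "take k ls @ ls!k # drop (Suc k) ls = ls" by (rule id_take_nth_drop[OF k, symmetric])
  have "distinct (take k ls @ ls!k # drop (Suc k) ls)" using d e by simp
  then have nin: "ls!k \<notin> set (take k ls)" by simp
  have "remove1 (ls!k) (take k ls @ ls!k # drop (Suc k) ls) = take k ls @ drop (Suc k) ls"
    using nin by (simp add: remove1_append)
  then show ?thesis unfolding e by (simp add: del_def)
qed

lemma sl_remove:
  assumes S: "finite S" and k: "k < length (sorted_list_of_set S)"
  shows "sorted_list_of_set (S - {sorted_list_of_set S ! k}) = del k (sorted_list_of_set S)"
proof -
  have "sorted_list_of_set (S - {sorted_list_of_set S ! k}) = remove1 (sorted_list_of_set S ! k) (sorted_list_of_set S)"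
    by (rule sorted_list_of_set_remove) (use S in auto)
  also have "\<dots> = del k (sorted_list_of_set S)"
    by (rule remove1_del[OF _ k]) simp
  finally show ?thesis .
qed

lemma del_map: "k < length ls \<Longrightarrow> del k (map f ls) = map f (del k ls)"
  by (simp add: del_def take_map drop_map)

lemma conn:
  fixes p :: "nat \<Rightarrow> real"
  assumes mono: "\<And>a b. a \<in> U \<Longrightarrow> b \<in> U \<Longrightarrow> a \<le> b \<Longrightarrow> p a \<le> p b"
    and rng: "\<And>a. a \<in> U \<Longrightarrow> 0 \<le> p a \<and> p a \<le> 1"
  shows "finite S \<Longrightarrow> S \<subseteq> U \<Longrightarrow> card S = N \<Longrightarrow> C p S \<theta> = E (map p (sorted_list_of_set S)) \<theta>"
proof (induction N arbitrary: S \<theta>)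
  case 0
  then have "S = {}" by simp
  then show ?case by (simp add: C_def E_def)
next
  case (Suc N)
  define ls where "ls = sorted_list_of_set S"
  define xs where "xs = map p ls"
  have lls: "length ls = Suc N" using Suc.prems by (simp add: ls_def)
  have lxs: "length xs = Suc N" using lls by (simp add: xs_def)
  have setls: "set ls = S" using Suc.prems by (simp add: ls_def)
  have good: "good xs"
    unfolding good_def
  proof (intro conjI allI impI ballI)
    fix y assume "y \<in> set xs"
    then obtain a where "a \<in> S" "y = p a" using setls by (auto simp: xs_def)
    then show "0 \<le> y" "y \<le> 1" using rng Suc.prems by auto
  next
    fix a b assume ab: "a \<le> b" "b < length xs"
    have "ls!a \<le> ls!b" using ab lls lxs by (intro sorted_nth_mono) (auto simp: ls_def)
    moreover have "a < length ls" "b < length ls" using ab lls lxs by auto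
    then have "ls!a \<in> S" "ls!b \<in> S" using setls nth_mem by blast+
    then have "ls!a \<in> U" "ls!b \<in> U" using Suc.prems by auto
    ultimately show "xs!a \<le> xs!b" using mono ab lls lxs by (simp add: xs_def)
  qed
  have F: "1 + p i * Cf N p (S - {i}) (\<theta> - 1) + (1 - p i) * Cf N p (S - {i}) \<theta> = gE xs \<theta> k"
    if k: "k < Suc N" and ik: "i = ls!k" for i k
  proof -
    have kl: "k < length ls" using k lls by simp
    have iS: "i \<in> S" using kl ik setls by auto
    have cS: "card (S - {i}) = N" using iS Suc.prems by simp
    have rem: "sorted_list_of_set (S - {i}) = del k ls"
      unfolding ik ls_def by (rule sl_remove) (use Suc.prems kl in \<open>auto simp: ls_def\<close>)
    have IH: "Cf N p (S - {i}) t = E (del k xs) t" for t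
    proof -
      have "Cf N p (S - {i}) t = C p (S - {i}) t" by (simp add: C_def cS)
      also have "\<dots> = E (map p (sorted_list_of_set (S - {i}))) t"
        by (rule Suc.IH) (use Suc.prems cS in auto)
      also have "\<dots> = E (del k xs) t" unfolding rem xs_def using kl by (simp add: del_map)
      finally show ?thesis .
    qed
    have px: "p i = xs!k" using kl ik by (simp add: xs_def)
    show ?thesis unfolding IH px gE_def ..
  qed
  have CS: "C p S \<theta> = Cf (Suc N) p S \<theta>" by (simp add: C_def Suc.prems)
  show ?case
  proof (cases "\<theta> \<le> 0 \<or> \<theta> > int (Suc N)")
    case True
    then show ?thesis unfolding CS xs_def[symmetric] ls_def[symmetric] using lxs
      by (auto simp: E_def)
  next
    case False
    then have th1: "1 \<le> \<theta>" and th2: "\<theta> \<le> int (length xs)" using lxs by auto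
    have "Cf (Suc N) p S \<theta> = Min ((\<lambda>i. 1 + p i * Cf N p (S - {i}) (\<theta> - 1) + (1 - p i) * Cf N p (S - {i}) \<theta>) ` S)"
      using False by simp
    also have "\<dots> = E xs \<theta>"
    proof (rule Min_eqI)
      show "finite ((\<lambda>i. 1 + p i * Cf N p (S - {i}) (\<theta> - 1) + (1 - p i) * Cf N p (S - {i}) \<theta>) ` S)"
        using Suc.prems by simp
    next
      fix y assume "y \<in> (\<lambda>i. 1 + p i * Cf N p (S - {i}) (\<theta> - 1) + (1 - p i) * Cf N p (S - {i}) \<theta>) ` S"
      then obtain i where iS: "i \<in> S" and y: "y = 1 + p i * Cf N p (S - {i}) (\<theta> - 1) + (1 - p i) * Cf N p (S - {i}) \<theta>"
        by auto
      obtain k where k: "k < length ls" "ls!k = i" using iS setls by (metis in_set_conv_nth)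
      have "y = gE xs \<theta> k" using F[of k i] k lls y by simp
      then show "E xs \<theta> \<le> y" using bell[OF good _ th1 th2, of k] k lls lxs by simp
    next
      define m where "m = nat (int (length xs) - \<theta>)"
      have ml: "m < Suc N" using th1 lxs by (simp add: m_def)
      have mem: "ls!m \<in> S" using ml lls setls by auto
      have eq: "1 + p (ls!m) * Cf N p (S - {ls!m}) (\<theta> - 1) + (1 - p (ls!m)) * Cf N p (S - {ls!m}) \<theta> = E xs \<theta>"
        using F[OF ml refl] bell_med[of xs \<theta>] ml lxs th1 th2 by (simp add: m_def)
      show "E xs \<theta> \<in> (\<lambda>i. 1 + p i * Cf N p (S - {i}) (\<theta> - 1) + (1 - p i) * Cf N p (S - {i}) \<theta>) ` S"
      proof (rule image_eqI[where x = "ls!m"])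
        show "ls!m \<in> S" by (rule mem)
      qed (rule eq[symmetric])
    qed
    finally show ?thesis unfolding CS xs_def ls_def .
  qed
qed

theorem theorem1:
  fixes p :: "nat \<Rightarrow> real" and n k :: nat
  assumes "n \<ge> 1"
    and "k \<le> n - 1"
    and "\<And>i. i \<in> {1..n} \<Longrightarrow> 0 \<le> p i \<and> p i \<le> 1"
    and "\<And>i j. i \<in> {1..n} \<Longrightarrow> j \<in> {1..n} \<Longrightarrow> i \<le> j \<Longrightarrow> p i \<le> p j"
  shows "C p {1..n} (int n - int k) =
           1 + p (k + 1) * C p ({1..n} - {k + 1}) (int n - int k - 1)
             + (1 - p (k + 1)) * C p ({1..n} - {k + 1}) (int n - int k)"
proof -
  define ls where "ls = sorted_list_of_set {1..n}"
  define xs where "xs = map p ls"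
  define \<theta> where "\<theta> = int n - int k"
  have lsv: "ls = [1..<Suc n]" unfolding ls_def atLeastLessThanSuc_atLeastAtMost[symmetric] by (simp del: upt_Suc)
  have kn: "k < n" using assms(1,2) by simp
  have lxs: "length xs = n" by (simp add: xs_def lsv del: upt_Suc)
  have lk: "ls!k = k + 1" using kn by (simp add: lsv nth_upt del: upt_Suc)
  have th1: "1 \<le> \<theta>" and th2: "\<theta> \<le> int (length xs)" using kn lxs by (auto simp: \<theta>_def)
  have mk: "nat (int (length xs) - \<theta>) = k" using lxs kn by (simp add: \<theta>_def)
  have conn': "C p S t = E (map p (sorted_list_of_set S)) t" if "S \<subseteq> {1..n}" for S t
    by (rule conn[of "{1..n}" p, OF assms(4) assms(3)]) (use that in \<open>auto intro: finite_subset\<close>)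
  have C1: "C p {1..n} \<theta> = E xs \<theta>" unfolding xs_def ls_def by (rule conn') simp
  have rem: "sorted_list_of_set ({1..n} - {k+1}) = del k ls"
    unfolding lk[symmetric] ls_def by (rule sl_remove) (use kn in \<open>simp_all add: ls_def[symmetric] lsv del: upt_Suc\<close>)
  have C2: "C p ({1..n} - {k+1}) t = E (del k xs) t" for t
  proof -
    have "C p ({1..n} - {k+1}) t = E (map p (sorted_list_of_set ({1..n} - {k+1}))) t" by (rule conn') auto
    also have "\<dots> = E (del k xs) t" unfolding rem xs_def using kn lsv by (simp add: del_map del: upt_Suc)
    finally show ?thesis .
  qed
  have "E xs \<theta> = gE xs \<theta> k" using bell_med[of xs \<theta>] th1 th2 kn lxs mk by simp
  also have "\<dots> = 1 + p (k + 1) * C p ({1..n} - {k + 1}) (\<theta> - 1) + (1 - p (k + 1)) * C p ({1..n} - {k + 1}) \<theta>"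
    unfolding gE_def C2 using kn lk by (simp add: xs_def lsv del: upt_Suc)
  finally show ?thesis using C1 by (simp add: \<theta>_def)
qed

end
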